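(* Let $k$ be an even positive integer and $\ell$ an even positive integer. Then, as formal power series in $t$, \[ \sum_{c\ge0}\operatorname{re}_k(\ell,c)\frac{t^c}{c!}=\cosh\Big(\sum_{g\in G_k(\ell)}\frac{\ell^{g-1}}{g}t^g\Big),\qquad \sum_{c\ge0}\operatorname{ro}_k(\ell,c)\frac{t^c}{c!}=\sinh\Big(\sum_{g\in G_k(\ell)}\frac{\ell^{g-1}}{g}t^g\Big). \]
   Context: $G_k(\ell)=\{g\in\mathbb N:\gcd(g\ell,k)=g\}$. A permutation of cycle type $(\ell)^c$ is a permutation of an $\ell c$-element set whose disjoint cycle decomposition consists of exactly $c$ cycles, all of length $\ell$. $\operatorname{re}_k(\ell,c)$ (resp. $\operatorname{ro}_k(\ell,c)$) denotes the number of even (resp. odd) permutations $\tau$ of the same set with $\tau^k=\sigma$, for any fixed $\sigma$ of cycle type $(\ell)^c$. *)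

theory Defs
  imports "HOL-Combinatorics.Combinatorics" "HOL-Computational_Algebra.Formal_Power_Series"
begin

definition G_set :: "nat \<Rightarrow> nat \<Rightarrow> nat set" where
  "G_set k l = {g. gcd (g * l) k = g}"

definition has_cycle_type :: "(nat \<Rightarrow> nat) \<Rightarrow> nat set \<Rightarrow> nat \<Rightarrow> nat \<Rightarrow> bool" where
  "has_cycle_type \<sigma> S l c \<longleftrightarrow> \<sigma> permutes S \<and>
     card {orbit \<sigma> x | x. x \<in> S} = c \<and> (\<forall>x\<in>S. card (orbit \<sigma> x) = l)"

definition ground :: "nat \<Rightarrow> nat \<Rightarrow> nat set" where
  "ground l c = {..<l * c}"

definition std_perm :: "nat \<Rightarrow> nat \<Rightarrow> nat \<Rightarrow> nat" where
  "std_perm l c = (SOME \<sigma>. has_cycle_type \<sigma> (ground l c) l c)"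

definition re :: "nat \<Rightarrow> nat \<Rightarrow> nat \<Rightarrow> nat" where
  "re k l c = card {\<tau>. \<tau> permutes ground l c \<and> \<tau> ^^ k = std_perm l c \<and> evenperm \<tau>}"

definition ro :: "nat \<Rightarrow> nat \<Rightarrow> nat \<Rightarrow> nat" where
  "ro k l c = card {\<tau>. \<tau> permutes ground l c \<and> \<tau> ^^ k = std_perm l c \<and> \<not> evenperm \<tau>}"

definition fps_cosh_ser :: "real fps" where
  "fps_cosh_ser = Abs_fps (\<lambda>n. if even n then 1 / fact n else 0)"

definition fps_sinh_ser :: "real fps" where
  "fps_sinh_ser = Abs_fps (\<lambda>n. if odd n then 1 / fact n else 0)"

definition inner_ser :: "nat \<Rightarrow> nat \<Rightarrow> real fps" where
  "inner_ser k l = Abs_fps (\<lambda>g. if g \<in> G_set k l then real l ^ (g - 1) / real g else 0)"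

end

theory Submission
  imports Defs
begin


lemma fps_ode_unique:
  fixes X Y X' Y' h :: "real fps"
  assumes "fps_deriv X = h * Y" "fps_deriv Y = h * X"
    "fps_deriv X' = h * Y'" "fps_deriv Y' = h * X'"
    "fps_nth X 0 = fps_nth X' 0" "fps_nth Y 0 = fps_nth Y' 0"
  shows "X = X' \<and> Y = Y'"
proof -
  have "\<forall>m\<le>n. fps_nth X m = fps_nth X' m \<and> fps_nth Y m = fps_nth Y' m" for n
  proof (induction n)
    case 0 then show ?case using assms(5,6) by auto
  next
    case (Suc n)
    have eqX: "fps_nth (h * Y) n = fps_nth (h * Y') n" "fps_nth (h * X) n = fps_nth (h * X') n"
      using Suc by (auto simp: fps_mult_nth intro!: sum.cong)
    have "fps_nth (fps_deriv X) n = fps_nth (fps_deriv X') n" "fps_nth (fps_deriv Y) n = fps_nth (fps_deriv Y') n"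
      using eqX assms(1-4) by auto
    then have "fps_nth X (Suc n) = fps_nth X' (Suc n) \<and> fps_nth Y (Suc n) = fps_nth Y' (Suc n)"
      by (simp del: of_nat_Suc) 
    then show ?case using Suc by (auto simp: le_Suc_eq)
  qed
  then show ?thesis by (auto simp: fps_eq_iff)
qed

lemma deriv_cosh: "fps_deriv fps_cosh_ser = fps_sinh_ser"
  by (auto simp: fps_eq_iff fps_cosh_ser_def fps_sinh_ser_def fact_Suc field_simps simp del: of_nat_Suc)

lemma deriv_sinh: "fps_deriv fps_sinh_ser = fps_cosh_ser"
  by (auto simp: fps_eq_iff fps_cosh_ser_def fps_sinh_ser_def fact_Suc field_simps simp del: of_nat_Suc)

lemma inner0: "k > 0 \<Longrightarrow> fps_nth (inner_ser k l) 0 = 0"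
  by (simp add: inner_ser_def G_set_def)

lemma fps_main:
  fixes A B :: "nat \<Rightarrow> nat" and k l :: nat
  assumes k: "k > 0"
  and A0: "A 0 = 1" and B0: "B 0 = 0"
  and recA: "\<And>n. real (A (Suc n)) / fact n = (\<Sum>g\<in>{g\<in>G_set k l. g \<le> Suc n}. real l ^ (g - 1) * real (B (Suc n - g)) / fact (Suc n - g))"
  and recB: "\<And>n. real (B (Suc n)) / fact n = (\<Sum>g\<in>{g\<in>G_set k l. g \<le> Suc n}. real l ^ (g - 1) * real (A (Suc n - g)) / fact (Suc n - g))"
  shows "Abs_fps (\<lambda>c. real (A c) / fact c) = fps_cosh_ser oo inner_ser k l
       \<and> Abs_fps (\<lambda>c. real (B c) / fact c) = fps_sinh_ser oo inner_ser k l"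
proof -
  define h where "h = fps_deriv (inner_ser k l)"
  have G0: "0 \<notin> G_set k l" using k by (simp add: G_set_def)
  have key: "fps_deriv (Abs_fps (\<lambda>c. real (C c) / fact c)) = h * Abs_fps (\<lambda>c. real (D c) / fact c)"
    if rec: "\<And>n. real (C (Suc n)) / fact n = (\<Sum>g\<in>{g\<in>G_set k l. g \<le> Suc n}. real l ^ (g - 1) * real (D (Suc n - g)) / fact (Suc n - g))"
    for C D :: "nat \<Rightarrow> nat"
  proof (rule fps_ext)
    fix n
    have lhs: "fps_nth (fps_deriv (Abs_fps (\<lambda>c. real (C c) / fact c))) n = real (C (Suc n)) / fact n"
      by (simp add: fact_Suc field_simps del: of_nat_Suc)
    have "fps_nth (h * Abs_fps (\<lambda>c. real (D c) / fact c)) n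
        = (\<Sum>i=0..n. (if Suc i \<in> G_set k l then real l ^ i else 0) * (real (D (n - i)) / fact (n - i)))"
      unfolding fps_mult_nth h_def
      by (intro sum.cong) (auto simp: inner_ser_def simp del: of_nat_Suc)
    also have "\<dots> = (\<Sum>i\<in>{0..n}. if Suc i \<in> G_set k l then real l ^ i * (real (D (n - i)) / fact (n - i)) else 0)"
      by (intro sum.cong) auto
    also have "\<dots> = (\<Sum>i\<in>{i\<in>{0..n}. Suc i \<in> G_set k l}. real l ^ i * (real (D (n - i)) / fact (n - i)))"
      by (rule sum.inter_filter[symmetric]) simp
    also have "\<dots> = (\<Sum>g\<in>{g\<in>G_set k l. g \<le> Suc n}. real l ^ (g - 1) * real (D (Suc n - g)) / fact (Suc n - g))"
    proof (rule sum.reindex_bij_witness[where i = "\<lambda>g. g - 1" and j = Suc])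
      fix g assume gA: "g \<in> {g\<in>G_set k l. g \<le> Suc n}"
      have gG: "g \<in> G_set k l" "g \<le> Suc n" using gA by auto
      have g0: "g \<noteq> 0" "g \<in> G_set k l" "g \<le> Suc n" using G0 gG by (cases g, auto)
      then have e1: "Suc (g - 1) = g" and e2: "n - (g - 1) = Suc n - g" by arith+
      show "Suc (g - 1) = g" by (rule e1)
      show "g - 1 \<in> {i\<in>{0..n}. Suc i \<in> G_set k l}" using g0 e1 by auto
    qed auto
    finally show "fps_nth (fps_deriv (Abs_fps (\<lambda>c. real (C c) / fact c))) n = fps_nth (h * Abs_fps (\<lambda>c. real (D c) / fact c)) n"
      using lhs rec by simp
  qed
  have i0: "fps_nth (inner_ser k l) 0 = 0" using inner0[OF k] .
  show ?thesis
  proof (rule fps_ode_unique[where h = h])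
    show "fps_deriv (Abs_fps (\<lambda>c. real (A c) / fact c)) = h * Abs_fps (\<lambda>c. real (B c) / fact c)"
      by (rule key[OF recA])
    show "fps_deriv (Abs_fps (\<lambda>c. real (B c) / fact c)) = h * Abs_fps (\<lambda>c. real (A c) / fact c)"
      by (rule key[OF recB])
    show "fps_deriv (fps_cosh_ser oo inner_ser k l) = h * (fps_sinh_ser oo inner_ser k l)"
      by (simp add: fps_compose_deriv[OF i0] deriv_cosh h_def mult.commute)
    show "fps_deriv (fps_sinh_ser oo inner_ser k l) = h * (fps_cosh_ser oo inner_ser k l)"
      by (simp add: fps_compose_deriv[OF i0] deriv_sinh h_def mult.commute)
  qed (auto simp: A0 B0 fps_cosh_ser_def fps_sinh_ser_def)
qed


definition periodic :: "nat \<Rightarrow> ('a \<Rightarrow> 'a) \<Rightarrow> 'a \<Rightarrow> bool" where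
  "periodic m f x \<longleftrightarrow> (f ^^ m) x = x \<and> (\<forall>j. 0 < j \<longrightarrow> j < m \<longrightarrow> (f ^^ j) x \<noteq> x)"

definition orb :: "('a \<Rightarrow> 'a) \<Rightarrow> 'a \<Rightarrow> 'a set" where
  "orb f z = range (\<lambda>j. (f ^^ j) z)"

lemma per_eq:
  assumes "periodic m f x" "0 < m"
  shows "(f ^^ a) x = (f ^^ b) x \<longleftrightarrow> a mod m = b mod m"
proof -
  have fm: "(f ^^ m) x = x" and nz: "\<And>j. 0 < j \<Longrightarrow> j < m \<Longrightarrow> (f ^^ j) x \<noteq> x"
    using assms(1) by (auto simp: periodic_def)
  have red: "(f ^^ a) x = (f ^^ (a mod m)) x" for a
    using funpow_mod_eq[OF fm] by metis
  have lt: False if "(f ^^ a') x = (f ^^ b') x" "a' < b'" "b' < m" for a' b'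
  proof -
    have "(f ^^ (m - b' + a')) x = (f ^^ (m - b')) ((f ^^ a') x)"
      by (simp add: funpow_add)
    also have "\<dots> = (f ^^ (m - b')) ((f ^^ b') x)" using that(1) by simp
    also have "\<dots> = (f ^^ m) x" using that(3)
      by (simp add: funpow_add[symmetric, THEN fun_cong, simplified])
    finally have "(f ^^ (m - b' + a')) x = x" using fm by simp
    with nz[of "m - b' + a'"] that show False by auto
  qed
  show ?thesis
  proof
    assume "(f ^^ a) x = (f ^^ b) x"
    then have e: "(f ^^ (a mod m)) x = (f ^^ (b mod m)) x" using red by metis
    have "a mod m < m" "b mod m < m" using assms(2) by auto
    show "a mod m = b mod m"
    proof (rule ccontr)
      assume "a mod m \<noteq> b mod m"
      then consider "a mod m < b mod m" | "b mod m < a mod m" by linarith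
      then show False
      proof cases
        case 1 then show False using lt[OF e 1] \<open>b mod m < m\<close> by blast
      next
        case 2 then show False using lt[OF e[symmetric] 2] \<open>a mod m < m\<close> by blast
      qed
    qed
  next
    assume "a mod m = b mod m"
    then show "(f ^^ a) x = (f ^^ b) x" using red by metis
  qed
qed

lemma periodic_funpow:
  assumes "periodic m f x" "0 < m"
  shows "periodic m f ((f ^^ j) x)"
proof -
  have E1: "(f ^^ i) ((f ^^ j) x) = (f ^^ j) x \<longleftrightarrow> (i + j) mod m = j mod m" for i
    using per_eq[OF assms, of "i + j" j] by (simp add: funpow_add)
  have E2: "(i + j) mod m = j mod m \<longleftrightarrow> i mod m = 0" for i
    by (simp add: mod_eq_dvd_iff_nat dvd_eq_mod_eq_0)
  have E: "(f ^^ i) ((f ^^ j) x) = (f ^^ j) x \<longleftrightarrow> i mod m = 0" for i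
    by (simp only: E1 E2)
  show ?thesis unfolding periodic_def
  proof (intro conjI allI impI)
    show "(f ^^ m) ((f ^^ j) x) = (f ^^ j) x" using E[of m] by simp
    fix i assume "0 < i" "i < m"
    then show "(f ^^ i) ((f ^^ j) x) \<noteq> (f ^^ j) x" using E[of i] by simp
  qed
qed

lemma self_orb: "z \<in> orb f z"
  unfolding orb_def by (metis funpow_0 rangeI)

lemma orb_image:
  assumes "periodic m f z" "0 < m"
  shows "orb f z = (\<lambda>j. (f ^^ j) z) ` {..<m}"
proof -
  have "(f ^^ j) z \<in> (\<lambda>j. (f ^^ j) z) ` {..<m}" for j
    using per_eq[OF assms, of j "j mod m"] assms(2) by (intro image_eqI[of _ _ "j mod m"]) auto
  then show ?thesis unfolding orb_def by auto
qed

lemma card_orb: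
  assumes "periodic m f z" "0 < m"
  shows "card (orb f z) = m"
proof -
  have "inj_on (\<lambda>j. (f ^^ j) z) {..<m}"
    using per_eq[OF assms] by (intro inj_onI) auto
  then show ?thesis using orb_image[OF assms] by (simp add: card_image)
qed

lemma orb_funpow:
  assumes "periodic m f z" "0 < m"
  shows "orb f ((f ^^ a) z) = orb f z"
proof
  show "orb f ((f ^^ a) z) \<subseteq> orb f z"
    unfolding orb_def by (auto simp: funpow_add[symmetric, THEN fun_cong, simplified])
  show "orb f z \<subseteq> orb f ((f ^^ a) z)"
  proof
    fix y assume "y \<in> orb f z"
    then obtain j where y: "y = (f ^^ j) z" unfolding orb_def by auto
    have ma: "m * a \<ge> a" using assms(2) by simp
    have e: "j + (m * a - a) + a = j + m * a" using le_add_diff_inverse2[OF ma] by simp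
    have "(f ^^ (j + m * a)) z = (f ^^ j) z"
      using per_eq[OF assms, of "j + m * a" j] by simp
    then have "(f ^^ (j + (m * a - a) + a)) z = (f ^^ j) z"
      unfolding e .
    then have "y = (f ^^ (j + (m * a - a))) ((f ^^ a) z)"
      using y by (simp add: funpow_add)
    then show "y \<in> orb f ((f ^^ a) z)" unfolding orb_def by auto
  qed
qed

lemma orb_mem_eq:
  assumes "y \<in> orb f z" "periodic m f z" "0 < m"
  shows "orb f y = orb f z"
proof -
  obtain a where "y = (f ^^ a) z" using assms(1) unfolding orb_def by blast
  then show ?thesis using orb_funpow[OF assms(2,3)] by simp
qed

lemma orb_step:
  assumes "periodic m f z" "0 < m"
  shows "orb f (f z) = orb f z"
  using orb_funpow[OF assms, of 1] by simp

lemma evenperm_cycle: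
  assumes "distinct cs" "cs \<noteq> []"
  shows "evenperm (cycle_of_list cs) \<longleftrightarrow> odd (length cs)"
  using assms
proof (induction cs rule: cycle_of_list.induct)
  case (1 i j cs)
  have "evenperm (cycle_of_list (i # j # cs)) \<longleftrightarrow> (evenperm (transpose i j) = evenperm (cycle_of_list (j # cs)))"
    by (simp add: evenperm_comp permutation_of_cycle permutation_swap_id)
  also have "\<dots> \<longleftrightarrow> odd (length (i # j # cs))"
  proof -
    have "i \<noteq> j" using "1.prems" by auto
    moreover have "evenperm (cycle_of_list (j # cs)) \<longleftrightarrow> odd (length (j # cs))"
      using "1.IH" "1.prems" by simp
    ultimately show ?thesis by (simp add: evenperm_swap)
  qed
  finally show ?case .
next
  case ("2_2" v) then show ?case by (simp add: evenperm_id)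
next
  case "2_1" then show ?case by simp
qed

lemma perm_restrict_permutes':
  assumes "f permutes S" "\<forall>z\<in>S. f z \<in> A \<longleftrightarrow> z \<in> A" "A \<subseteq> S"
  shows "perm_restrict f A permutes A"
proof (rule bij_imp_permutes)
  show "bij_betw (perm_restrict f A) A A"
  proof (rule bij_betw_imageI)
    show "inj_on (perm_restrict f A) A"
    proof (rule inj_onI)
      fix a b assume "a \<in> A" "b \<in> A" "perm_restrict f A a = perm_restrict f A b"
      then have "f a = f b" by (simp add: perm_restrict_def)
      then show "a = b" using permutes_inj[OF assms(1)] by (rule injD[rotated])
    qed
    show "perm_restrict f A ` A = A"
    proof
      show "perm_restrict f A ` A \<subseteq> A"
      proof
        fix y assume "y \<in> perm_restrict f A ` A"
        then obtain z where z: "z \<in> A" "y = perm_restrict f A z" by blast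
        then have "y = f z" "z \<in> S" using assms(3) by (auto simp: perm_restrict_def)
        then show "y \<in> A" using assms(2) z(1) by blast
      qed
      show "A \<subseteq> perm_restrict f A ` A"
      proof
        fix y assume yA: "y \<in> A"
        then have "y \<in> S" using assms(3) by auto
        then have "y \<in> f ` S" using permutes_image[OF assms(1)] by simp
        then obtain z where z: "z \<in> S" "f z = y" by blast
        then have "z \<in> A" using assms(2) yA by auto
        then show "y \<in> perm_restrict f A ` A" using z by (auto simp: perm_restrict_def)
      qed
    qed
  qed
qed (simp add: perm_restrict_def)

lemma perm_restrict_funpow_in:
  assumes "\<forall>z\<in>A. f z \<in> A" "z \<in> A"
  shows "(perm_restrict f A ^^ j) z = (f ^^ j) z \<and> (f ^^ j) z \<in> A"
  by (induction j) (use assms in \<open>auto simp: perm_restrict_def\<close>)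

lemma perm_restrict_funpow_out:
  assumes "z \<notin> A"
  shows "(perm_restrict f A ^^ j) z = z"
  by (induction j) (use assms in \<open>auto simp: perm_restrict_def\<close>)


definition rootsb :: "nat \<Rightarrow> 'a set \<Rightarrow> ('a \<Rightarrow> 'a) \<Rightarrow> bool \<Rightarrow> ('a \<Rightarrow> 'a) set" where
  "rootsb k T f b = {\<tau>. \<tau> permutes T \<and> \<tau> ^^ k = f \<and> evenperm \<tau> = b}"

definition Vset :: "('a \<Rightarrow> 'a) \<Rightarrow> 'a set \<Rightarrow> 'a \<Rightarrow> nat \<Rightarrow> 'a list set" where
  "Vset f T x m = {ys. length ys = m \<and> set ys \<subseteq> T \<and> distinct (map (orb f) (x # ys))}"

lemma G_facts:
  assumes "g \<in> G_set k l" "0 < k" "0 < l" "even l"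
  shows "0 < g" "g dvd k" "\<exists>u. (k div g * u) mod l = 1"
proof -
  have gg: "gcd (g * l) k = g" using assms(1) by (simp add: G_set_def)
  show g0: "0 < g"
  proof (rule ccontr)
    assume "\<not> 0 < g" then have "g = 0" by simp
    with gg have "k = 0" by simp
    with assms(2) show False by simp
  qed
  show gk: "g dvd k" using gg by (metis gcd_dvd2)
  then obtain k' where k': "k = g * k'" by blast
  have "g * gcd l k' = g" using gg k' by (simp add: gcd_mult_distrib_nat)
  then have c1: "gcd l k' = 1" using g0 by simp
  have "k' \<noteq> 0" using k' assms(2) by auto
  then obtain a b where ab: "k' * a = l * b + gcd k' l" using bezout_nat by blast
  then have ab1: "k' * a = l * b + 1" using c1 by (simp add: gcd.commute)
  have l1: "1 < l" using assms(3,4) by (cases "l = 1") auto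
  have "(l * b + 1) mod l = 1" using l1 by (metis mod_mult_self4 mod_less)
  then have "(k' * a) mod l = 1" unfolding ab1 .
  moreover have "k div g = k'" using k' g0 by simp
  ultimately show "\<exists>u. (k div g * u) mod l = 1" by auto
qed

locale dec =
  fixes k l :: nat and S :: "'a set" and \<sigma> :: "'a \<Rightarrow> 'a" and x :: 'a and n :: nat
  assumes kpos: "0 < k" and lpos: "0 < l" and leven: "even l"
    and fin: "finite S" and perm: "\<sigma> permutes S" and per: "\<forall>z\<in>S. periodic l \<sigma> z"
    and cardS: "card S = l * Suc n" and xS: "x \<in> S"
begin

definition uu :: "nat \<Rightarrow> nat" where "uu g = (SOME u. (k div g * u) mod l = 1)"
definition aseq :: "nat \<Rightarrow> 'a list \<Rightarrow> 'a list" where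
  "aseq g ys = map (\<lambda>p. (\<sigma> ^^ (uu g * (p div g))) ((x # ys) ! (p mod g))) [0..<g*l]"
definition Ob :: "nat \<Rightarrow> 'a list \<Rightarrow> 'a set" where "Ob g ys = set (aseq g ys)"
definition rho :: "nat \<Rightarrow> 'a list \<Rightarrow> 'a \<Rightarrow> 'a" where "rho g ys = cycle_of_list (aseq g ys)"
definition Gc :: "nat set" where "Gc = {g \<in> G_set k l. g \<le> Suc n}"
definition Fib :: "nat \<Rightarrow> 'a list \<Rightarrow> bool \<Rightarrow> ('a \<Rightarrow> 'a) set" where
  "Fib g ys b = {\<tau> \<in> rootsb k S \<sigma> b. \<forall>z\<in>Ob g ys. \<tau> z = rho g ys z}"

lemma uu: "g \<in> G_set k l \<Longrightarrow> (k div g * uu g) mod l = 1"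
  unfolding uu_def by (rule someI_ex) (rule G_facts(3)[OF _ kpos lpos leven])

lemma funpow_S: "z \<in> S \<Longrightarrow> (\<sigma> ^^ j) z \<in> S"
  using permutes_in_image[OF permutes_funpow[OF perm]] by simp

lemma perz: "z \<in> S \<Longrightarrow> periodic l \<sigma> z" using per by blast

lemma sig_eq: "z \<in> S \<Longrightarrow> (\<sigma> ^^ a) z = (\<sigma> ^^ b) z \<longleftrightarrow> a mod l = b mod l"
  by (rule per_eq[OF perz lpos])

lemma l1: "1 < l" using lpos leven by (cases "l = 1") auto

context
  fixes g ys
  assumes gv: "g \<in> Gc" and ysv: "ys \<in> Vset \<sigma> S x (g - 1)"
begin

lemma gG: "g \<in> G_set k l" using gv by (simp add: Gc_def)
lemma g_pos: "0 < g" using G_facts(1)[OF gG kpos lpos leven] .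
lemma g_dvd: "g dvd k" using G_facts(2)[OF gG kpos lpos leven] .
lemma g_le: "g \<le> Suc n" using gv by (simp add: Gc_def)

lemma zs_len: "length (x # ys) = g" using ysv g_pos by (simp add: Vset_def)

lemma zs_S: "r < g \<Longrightarrow> (x # ys) ! r \<in> S"
  using ysv xS zs_len nth_mem[of r "x # ys"] by (auto simp: Vset_def)

lemma zs_orb: "r < g \<Longrightarrow> r' < g \<Longrightarrow> orb \<sigma> ((x # ys) ! r) = orb \<sigma> ((x # ys) ! r') \<Longrightarrow> r = r'"
proof -
  assume a: "r < g" "r' < g" "orb \<sigma> ((x # ys) ! r) = orb \<sigma> ((x # ys) ! r')"
  have "distinct (map (orb \<sigma>) (x # ys))" using ysv by (simp add: Vset_def)
  moreover have "map (orb \<sigma>) (x # ys) ! r = map (orb \<sigma>) (x # ys) ! r'"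
    using a zs_len by (metis nth_map)
  ultimately show "r = r'" using a zs_len by (simp only: nth_eq_iff_index_eq length_map)
qed

lemma as_len: "length (aseq g ys) = g * l" by (simp add: aseq_def)

lemma as_nth: "p < g * l \<Longrightarrow> aseq g ys ! p = (\<sigma> ^^ (uu g * (p div g))) ((x # ys) ! (p mod g))"
  by (simp add: aseq_def)

lemma as_S: "p < g * l \<Longrightarrow> aseq g ys ! p \<in> S"
  using as_nth funpow_S zs_S g_pos by simp

lemma cancel_u: "(uu g * s) mod l = (uu g * s') mod l \<Longrightarrow> s mod l = s' mod l"
proof -
  assume a: "(uu g * s) mod l = (uu g * s') mod l"
  have u: "(k div g * uu g) mod l = 1" using uu[OF gG] .
  have "s mod l = ((k div g * uu g) mod l * s) mod l" using u by simp
  also have "\<dots> = (k div g * ((uu g * s) mod l)) mod l"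
    by (simp add: mod_mult_left_eq mod_mult_right_eq mult.assoc)
  also have "\<dots> = (k div g * ((uu g * s') mod l)) mod l" using a by simp
  also have "\<dots> = ((k div g * uu g) mod l * s') mod l"
    by (simp add: mod_mult_left_eq mod_mult_right_eq mult.assoc)
  also have "\<dots> = s' mod l" using u by simp
  finally show ?thesis .
qed

lemma as_distinct: "distinct (aseq g ys)"
  unfolding distinct_conv_nth as_len
proof (intro allI impI)
  fix p q assume pq: "p < g * l" "q < g * l" "p \<noteq> q"
  show "aseq g ys ! p \<noteq> aseq g ys ! q"
  proof
    assume eq: "aseq g ys ! p = aseq g ys ! q"
    define y where "y = (x # ys) ! (p mod g)"
    define y' where "y' = (x # ys) ! (q mod g)"
    have rp: "p mod g < g" "q mod g < g" using g_pos by auto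
    have yS: "y \<in> S" "y' \<in> S" using zs_S rp by (auto simp: y_def y'_def)
    have e1: "(\<sigma> ^^ (uu g * (p div g))) y = (\<sigma> ^^ (uu g * (q div g))) y'"
      using eq as_nth pq by (simp add: y_def y'_def)
    have "orb \<sigma> y = orb \<sigma> y'"
      using orb_funpow[of l \<sigma> y "uu g * (p div g)"] orb_funpow[of l \<sigma> y' "uu g * (q div g)"]
        e1 per yS lpos by auto
    then have r: "p mod g = q mod g" using zs_orb rp by (simp add: y_def y'_def)
    then have "y = y'" by (simp add: y_def y'_def)
    then have "(uu g * (p div g)) mod l = (uu g * (q div g)) mod l"
      using e1 sig_eq yS by simp
    then have "(p div g) mod l = (q div g) mod l" by (rule cancel_u)
    moreover have "p div g < l" "q div g < l" using pq
      by (simp_all add: less_mult_imp_div_less mult.commute)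
    ultimately have "p div g = q div g" by simp
    with r have "p = q" by (metis div_mult_mod_eq)
    with pq show False by simp
  qed
qed

lemma Ob_card: "card (Ob g ys) = g * l"
  using distinct_card[OF as_distinct] as_len by (simp add: Ob_def)

lemma Ob_S: "Ob g ys \<subseteq> S"
  using as_S as_len by (auto simp: Ob_def in_set_conv_nth)

lemma rho_step: "p < g * l \<Longrightarrow> rho g ys (aseq g ys ! p) = aseq g ys ! (Suc p mod (g * l))"
proof -
  assume p: "p < g * l"
  have "map (cycle_of_list (aseq g ys) ^^ 1) (aseq g ys) = rotate 1 (aseq g ys)"
    by (rule cyclic_rotation[OF as_distinct])
  then have "map (rho g ys) (aseq g ys) = rotate1 (aseq g ys)" by (simp add: rho_def)
  then have "map (rho g ys) (aseq g ys) ! p = rotate1 (aseq g ys) ! p" by simp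
  then show ?thesis using p as_len by (simp add: nth_rotate1)
qed

lemma rho_pow: "p < g * l \<Longrightarrow> (rho g ys ^^ j) (aseq g ys ! p) = aseq g ys ! ((p + j) mod (g * l))"
proof (induction j)
  case 0 then show ?case by simp
next
  case (Suc j)
  have "(rho g ys ^^ Suc j) (aseq g ys ! p) = rho g ys (aseq g ys ! ((p + j) mod (g * l)))"
    using Suc by simp
  also have "\<dots> = aseq g ys ! (Suc ((p + j) mod (g * l)) mod (g * l))"
    using rho_step g_pos lpos by simp
  also have "Suc ((p + j) mod (g * l)) mod (g * l) = (p + Suc j) mod (g * l)"
    by (simp add: mod_Suc_eq)
  finally show ?case .
qed

lemma rho_k: "p < g * l \<Longrightarrow> (rho g ys ^^ k) (aseq g ys ! p) = \<sigma> (aseq g ys ! p)"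
proof -
  assume p: "p < g * l"
  define r s k' u where "r = p mod g" and "s = p div g" and "k' = k div g" and "u = uu g"
  have kk: "k = g * k'" using g_dvd by (simp add: k'_def)
  have u1: "(k' * u) mod l = 1" using uu[OF gG] by (simp add: k'_def u_def)
  have rg: "r < g" using g_pos by (simp add: r_def)
  have pdiv: "(p + k) div g = s + k'" using g_pos by (simp add: kk s_def)
  have pmod: "(p + k) mod g = r" by (simp add: kk r_def)
  define q where "q = (p + k) mod (g * l)"
  have q: "q = g * ((s + k') mod l) + r"
    unfolding q_def using mod_mult2_eq[of "p + k" g l] pdiv pmod by simp
  have ql: "q < g * l" using g_pos lpos by (simp add: q_def)
  have qdiv: "q div g = (s + k') mod l" using q rg g_pos by simp
  have qmod: "q mod g = r" using q rg by simp
  have "(rho g ys ^^ k) (aseq g ys ! p) = aseq g ys ! q" using rho_pow p by (simp add: q_def)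
  also have "\<dots> = (\<sigma> ^^ (u * ((s + k') mod l))) ((x # ys) ! r)"
    using as_nth[OF ql] qdiv qmod by (simp add: u_def)
  also have "\<dots> = (\<sigma> ^^ Suc (u * s)) ((x # ys) ! r)"
  proof -
    have "(u * ((s + k') mod l)) mod l = (u * s + (k' * u) mod l) mod l"
      by (metis add_mult_distrib2 mod_add_right_eq mod_mult_right_eq mult.commute)
    also have "\<dots> = (Suc (u * s)) mod l" using u1 by simp
    finally show ?thesis using sig_eq zs_S rg by blast
  qed
  also have "\<dots> = \<sigma> (aseq g ys ! p)" using as_nth[OF p] by (simp add: r_def s_def u_def)
  finally show ?thesis .
qed


lemma Ob_nth: "z \<in> Ob g ys \<Longrightarrow> \<exists>p<g*l. z = aseq g ys ! p"
  using as_len by (auto simp: Ob_def in_set_conv_nth)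

lemma rho_perm: "rho g ys permutes Ob g ys"
  unfolding rho_def Ob_def by (rule cycle_permutes)

lemma rho_permutation: "permutation (rho g ys)"
  unfolding rho_def by (rule permutation_of_cycle)

lemma rho_k_Ob: "z \<in> Ob g ys \<Longrightarrow> (rho g ys ^^ k) z = \<sigma> z"
  using Ob_nth rho_k by blast

lemma rho_out: "z \<notin> Ob g ys \<Longrightarrow> (rho g ys ^^ j) z = z"
proof (induction j)
  case (Suc j)
  then show ?case using permutes_not_in[OF rho_perm] by simp
qed simp

lemma rho_in: "z \<in> Ob g ys \<Longrightarrow> (rho g ys ^^ j) z \<in> Ob g ys"
  using permutes_in_image[OF permutes_funpow[OF rho_perm]] by simp

lemma rho_odd: "\<not> evenperm (rho g ys)"
proof -
  have "aseq g ys \<noteq> []" using as_len g_pos lpos by (metis length_0_conv mult_pos_pos less_irrefl)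
  moreover have "even (length (aseq g ys))" using as_len leven by simp
  ultimately show ?thesis using evenperm_cycle[OF as_distinct] by (simp add: rho_def)
qed

lemma sigma_Ob_in: "z \<in> Ob g ys \<Longrightarrow> \<sigma> z \<in> Ob g ys"
  using rho_k_Ob rho_in by metis

lemma Ob_finite: "finite (Ob g ys)" by (simp add: Ob_def)

lemma sigma_Ob: "z \<in> S \<Longrightarrow> \<sigma> z \<in> Ob g ys \<longleftrightarrow> z \<in> Ob g ys"
proof
  assume zS: "z \<in> S" and sz: "\<sigma> z \<in> Ob g ys"
  have inj: "inj \<sigma>" using permutes_inj[OF perm] .
  have "\<sigma> ` Ob g ys = Ob g ys"
    by (rule endo_inj_surj[OF Ob_finite]) (use sigma_Ob_in inj in \<open>auto intro: inj_on_subset\<close>)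
  then obtain w where "w \<in> Ob g ys" "\<sigma> z = \<sigma> w" using sz by (metis imageE)
  then show "z \<in> Ob g ys" using inj by (metis injD)
qed (rule sigma_Ob_in)

lemma sub_closed: "\<forall>z\<in>S - Ob g ys. \<sigma> z \<in> S - Ob g ys"
  using sigma_Ob permutes_in_image[OF perm] by blast

lemma sub_perm: "perm_restrict \<sigma> (S - Ob g ys) permutes (S - Ob g ys)"
proof (rule perm_restrict_permutes'[OF perm])
  show "\<forall>z\<in>S. (\<sigma> z \<in> S - Ob g ys) = (z \<in> S - Ob g ys)"
    using sigma_Ob permutes_in_image[OF perm] by blast
qed auto

lemma sub_per: "\<forall>z\<in>S - Ob g ys. periodic l (perm_restrict \<sigma> (S - Ob g ys)) z"
proof
  fix z assume z: "z \<in> S - Ob g ys"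
  have e: "(perm_restrict \<sigma> (S - Ob g ys) ^^ j) z = (\<sigma> ^^ j) z" for j
    using perm_restrict_funpow_in[OF sub_closed z] by blast
  show "periodic l (perm_restrict \<sigma> (S - Ob g ys)) z"
    using perz[of z] z unfolding periodic_def e by blast
qed

lemma sub_card: "card (S - Ob g ys) = l * (Suc n - g)"
proof -
  have "card (S - Ob g ys) = card S - card (Ob g ys)"
    by (rule card_Diff_subset[OF Ob_finite Ob_S])
  then show ?thesis using cardS Ob_card by (simp add: diff_mult_distrib2 mult.commute)
qed


lemma sub_S: "S - Ob g ys \<subseteq> S" by auto

lemma fib_sup:
  assumes t: "\<tau>' \<in> rootsb k (S - Ob g ys) (perm_restrict \<sigma> (S - Ob g ys)) (\<not> b)"
  shows "rho g ys \<circ> \<tau>' \<in> Fib g ys b"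
proof -
  let ?O = "Ob g ys" and ?r = "rho g ys"
  have tp: "\<tau>' permutes (S - ?O)" and tk: "\<tau>' ^^ k = perm_restrict \<sigma> (S - ?O)"
    and te: "evenperm \<tau>' = (\<not> b)" using t by (auto simp: rootsb_def)
  have tS: "\<tau>' permutes S" using permutes_subset[OF tp sub_S] .
  have rS: "?r permutes S" using permutes_subset[OF rho_perm Ob_S] .
  have perm1: "?r \<circ> \<tau>' permutes S" using permutes_compose[OF tS rS] .
  have tfix: "\<tau>' z = z" if "z \<in> ?O" for z using permutes_not_in[OF tp] that by blast
  have in_case: "((?r \<circ> \<tau>') ^^ j) z = (?r ^^ j) z" if "z \<in> ?O" for z j
  proof (induction j)
    case (Suc j)
    have "(?r ^^ j) z \<in> ?O" using rho_in that by blast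
    then show ?case using Suc by (simp add: tfix)
  qed simp
  have tpow_out: "(\<tau>' ^^ j) z \<notin> ?O" if "z \<notin> ?O" for z j
  proof (cases "z \<in> S - ?O")
    case True
    then have "(\<tau>' ^^ j) z \<in> S - ?O"
      using permutes_in_image[OF permutes_funpow[OF tp]] by blast
    then show ?thesis by blast
  next
    case False
    then have "(\<tau>' ^^ j) z = z"
      using permutes_not_in[OF permutes_funpow[OF tp]] by blast
    then show ?thesis using that by simp
  qed
  have out_case: "((?r \<circ> \<tau>') ^^ j) z = (\<tau>' ^^ j) z" if "z \<notin> ?O" for z j
  proof (induction j)
    case (Suc j)
    have "\<tau>' ((\<tau>' ^^ j) z) \<notin> ?O" using tpow_out[OF that, of "Suc j"] by simp
    then show ?case using Suc permutes_not_in[OF rho_perm] by simp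
  qed simp
  have pow: "(?r \<circ> \<tau>') ^^ k = \<sigma>"
  proof
    fix z
    show "((?r \<circ> \<tau>') ^^ k) z = \<sigma> z"
    proof (cases "z \<in> ?O")
      case True
      then show ?thesis using in_case rho_k_Ob by simp
    next
      case False
      then have "((?r \<circ> \<tau>') ^^ k) z = perm_restrict \<sigma> (S - ?O) z" using out_case tk by simp
      also have "\<dots> = \<sigma> z"
        using False permutes_not_in[OF perm] by (auto simp: perm_restrict_def)
      finally show ?thesis .
    qed
  qed
  have ev: "evenperm (?r \<circ> \<tau>') = b"
  proof -
    have "permutation \<tau>'" using tS fin permutation_permutes by blast
    then have "evenperm (?r \<circ> \<tau>') = (evenperm ?r = evenperm \<tau>')"
      using evenperm_comp rho_permutation by blast
    then show ?thesis using rho_odd te by simp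
  qed
  show ?thesis unfolding Fib_def rootsb_def using perm1 pow ev tfix by auto
qed

lemma fib_sub:
  assumes t: "\<tau> \<in> Fib g ys b"
  shows "perm_restrict \<tau> (S - Ob g ys) \<in> rootsb k (S - Ob g ys) (perm_restrict \<sigma> (S - Ob g ys)) (\<not> b)
    \<and> \<tau> = rho g ys \<circ> perm_restrict \<tau> (S - Ob g ys)"
proof -
  let ?O = "Ob g ys" and ?r = "rho g ys" and ?S' = "S - Ob g ys"
  let ?t = "perm_restrict \<tau> ?S'"
  have tp: "\<tau> permutes S" and tk: "\<tau> ^^ k = \<sigma>" and te: "evenperm \<tau> = b"
    and agree: "\<forall>z\<in>?O. \<tau> z = ?r z" using t by (auto simp: Fib_def rootsb_def)
  have tO: "\<tau> z \<in> ?O" if "z \<in> ?O" for z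
    using agree that permutes_in_image[OF rho_perm] by auto
  have inj: "inj \<tau>" using permutes_inj[OF tp] .
  have img: "\<tau> ` ?O = ?O"
    by (rule endo_inj_surj[OF Ob_finite]) (use tO inj in \<open>auto intro: inj_on_subset\<close>)
  have tO2: "\<tau> z \<in> ?O \<longleftrightarrow> z \<in> ?O" for z
  proof
    assume "\<tau> z \<in> ?O"
    then obtain w where "w \<in> ?O" "\<tau> z = \<tau> w" using img by (metis imageE)
    then show "z \<in> ?O" using inj by (metis injD)
  qed (rule tO)
  have closed: "\<forall>z\<in>?S'. \<tau> z \<in> ?S'"
    using tO2 permutes_in_image[OF tp] by blast
  have tp': "?t permutes ?S'"
  proof (rule perm_restrict_permutes'[OF tp])
    show "\<forall>z\<in>S. (\<tau> z \<in> ?S') = (z \<in> ?S')" using tO2 permutes_in_image[OF tp] by blast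
  qed auto
  have tk': "?t ^^ k = perm_restrict \<sigma> ?S'"
  proof
    fix z show "(?t ^^ k) z = perm_restrict \<sigma> ?S' z"
    proof (cases "z \<in> ?S'")
      case True
      then have "(?t ^^ k) z = (\<tau> ^^ k) z" using perm_restrict_funpow_in[OF closed] by blast
      then show ?thesis using True tk by (simp add: perm_restrict_def)
    next
      case False
      have "(?t ^^ k) z = z" using perm_restrict_funpow_out[OF False] .
      moreover have "perm_restrict \<sigma> ?S' z = z" using False by (simp only: perm_restrict_def if_False)
      ultimately show ?thesis by simp
    qed
  qed
  have decomp: "\<tau> = ?r \<circ> ?t"
  proof
    fix z show "\<tau> z = (?r \<circ> ?t) z"
    proof (cases "z \<in> ?O")
      case True
      then show ?thesis using agree by (simp add: perm_restrict_def)
    next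
      case False
      show ?thesis
      proof (cases "z \<in> S")
        case True
        then have "\<tau> z \<notin> ?O" using tO2 False by blast
        then show ?thesis using True False permutes_not_in[OF rho_perm] by (simp add: perm_restrict_def)
      next
        case F2: False
        then show ?thesis using False permutes_not_in[OF rho_perm] permutes_not_in[OF tp]
          by (simp add: perm_restrict_def)
      qed
    qed
  qed
  have ev: "evenperm ?t = (\<not> b)"
  proof -
    have "permutation ?t" using permutes_subset[OF tp' sub_S] fin permutation_permutes by blast
    then have "evenperm (?r \<circ> ?t) = (evenperm ?r = evenperm ?t)"
      using evenperm_comp rho_permutation by blast
    then show ?thesis using rho_odd te decomp by simp
  qed
  show ?thesis using tp' tk' ev decomp by (simp add: rootsb_def)
qed

lemma fib_card: "card (Fib g ys b) = card (rootsb k (S - Ob g ys) (perm_restrict \<sigma> (S - Ob g ys)) (\<not> b))"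
proof -
  let ?R = "rootsb k (S - Ob g ys) (perm_restrict \<sigma> (S - Ob g ys)) (\<not> b)"
  have eq: "Fib g ys b = (\<lambda>t. rho g ys \<circ> t) ` ?R"
  proof
    show "Fib g ys b \<subseteq> (\<lambda>t. rho g ys \<circ> t) ` ?R"
      using fib_sub by (metis (no_types, lifting) image_eqI subsetI)
    show "(\<lambda>t. rho g ys \<circ> t) ` ?R \<subseteq> Fib g ys b"
      using fib_sup by blast
  qed
  have "inj_on (\<lambda>t. rho g ys \<circ> t) ?R"
  proof (rule inj_onI)
    fix a c assume "rho g ys \<circ> a = rho g ys \<circ> c"
    then have "rho g ys (a z) = rho g ys (c z)" for z by (metis comp_apply)
    then show "a = c" using permutes_inj[OF rho_perm] by (metis injD ext)
  qed
  then show ?thesis using eq by (simp add: card_image)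
qed

lemma as0: "aseq g ys ! 0 = x"
  using as_nth[of 0] g_pos lpos by simp

lemma as_ys: "i < g - 1 \<Longrightarrow> aseq g ys ! Suc i = ys ! i"
proof -
  assume i: "i < g - 1"
  have "Suc i < g * l" using i lpos g_pos
    by (metis Suc_lessI less_diff_conv less_le_trans mult_le_mono2 mult.commute mult_1_right
        One_nat_def Suc_leI add.commute not_less_eq plus_1_eq_Suc)
  moreover have "Suc i div g = 0" "Suc i mod g = Suc i" using i by auto
  ultimately show ?thesis using as_nth by simp
qed

lemma fib_pow: "\<tau> \<in> Fib g ys b \<Longrightarrow> (\<tau> ^^ j) x = aseq g ys ! (j mod (g * l))"
proof -
  assume t: "\<tau> \<in> Fib g ys b"
  have agree: "\<forall>z\<in>Ob g ys. \<tau> z = rho g ys z" using t by (simp add: Fib_def)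
  have x0: "x \<in> Ob g ys" using as0 as_len g_pos lpos by (metis Ob_def nth_mem mult_pos_pos)
  have "(\<tau> ^^ j) x = (rho g ys ^^ j) x"
  proof (induction j)
    case (Suc j)
    then show ?case using agree rho_in[OF x0, of j] by simp
  qed simp
  also have "\<dots> = aseq g ys ! (j mod (g * l))"
    using rho_pow[of 0 j] as0 g_pos lpos by simp
  finally show ?thesis .
qed

end

lemma fib_disj:
  assumes gv: "g \<in> Gc" "ys \<in> Vset \<sigma> S x (g - 1)" and gv': "g' \<in> Gc" "ys' \<in> Vset \<sigma> S x (g' - 1)"
    and t: "\<tau> \<in> Fib g ys b" and t': "\<tau> \<in> Fib g' ys' b'"
  shows "g = g' \<and> ys = ys'"
proof -
  have A: "(\<tau> ^^ j) x = aseq g ys ! (j mod (g * l))" for j using fib_pow[OF gv t] .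
  have B: "(\<tau> ^^ j) x = aseq g' ys' ! (j mod (g' * l))" for j using fib_pow[OF gv' t'] .
  have gp: "0 < g" "0 < g'" using g_pos gv gv' by auto
  have zero: "(a * l) mod (c * l) = 0"
    if ga: "0 < a" "0 < c" and da: "distinct (aseq c zs)" "length (aseq c zs) = c * l"
      and x0: "aseq c zs ! 0 = x"
      and eq: "aseq c zs ! ((a * l) mod (c * l)) = x" for a c zs
  proof -
    have "(a * l) mod (c * l) < c * l" using ga lpos by simp
    moreover have "0 < c * l" using ga lpos by simp
    ultimately show ?thesis using da x0 eq nth_eq_iff_index_eq by metis
  qed
  have e1: "aseq g' ys' ! ((g * l) mod (g' * l)) = x" using A[of "g * l"] B[of "g * l"] as0[OF gv] by simp
  have e2: "aseq g ys ! ((g' * l) mod (g * l)) = x" using A[of "g' * l"] B[of "g' * l"] as0[OF gv'] by simp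
  have "(g * l) mod (g' * l) = 0"
    using zero[OF gp(1) gp(2) as_distinct[OF gv'] as_len[OF gv'] as0[OF gv'] e1] .
  moreover have "(g' * l) mod (g * l) = 0"
    using zero[OF gp(2) gp(1) as_distinct[OF gv] as_len[OF gv] as0[OF gv] e2] .
  ultimately have "g' * l dvd g * l" "g * l dvd g' * l" by (simp_all add: mod_eq_0_iff_dvd)
  then have "g * l = g' * l" by (rule dvd_antisym[rotated])
  then have gg: "g = g'" using lpos by simp
  have len: "length ys = g - 1" "length ys' = g - 1" using gv(2) gv'(2) gg by (auto simp: Vset_def)
  have "ys ! i = ys' ! i" if i: "i < g - 1" for i
  proof -
    have il: "Suc i < g * l" using i lpos
      by (metis Suc_lessI gp(1) less_diff_conv less_le_trans mult_le_mono2 mult.commute mult_1_right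
          One_nat_def Suc_leI add.commute not_less_eq plus_1_eq_Suc)
    have "ys ! i = aseq g ys ! Suc i" using as_ys[OF gv i] by simp
    also have "\<dots> = (\<tau> ^^ Suc i) x" using A[of "Suc i"] il by simp
    also have "\<dots> = aseq g ys' ! Suc i" using B[of "Suc i"] il gg by simp
    also have "\<dots> = ys' ! i" using as_ys[OF gv'[folded gg] i] by simp
    finally show ?thesis .
  qed
  then have "ys = ys'" using len by (simp add: nth_equalityI)
  then show ?thesis using gg by simp
qed


lemma ar_a: "0 < (g::nat) \<Longrightarrow> g = gcd m k \<Longrightarrow> m \<noteq> 0 \<Longrightarrow> m dvd k * l \<Longrightarrow> m div g dvd l"
  by (smt (verit, del_insts) div_dvd_iff_mult dvd_mult_div_cancel
    dvd_mult_right dvd_times_right_cancel_iff dvd_triv_right gcd.commute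
    gcd_dvd2 gcd_greatest_iff gcd_idem_nat gcd_mult_distrib_nat neq0_conv
    nonzero_mult_div_cancel_right)

lemma ar_b: "(g::nat) dvd k \<Longrightarrow> g dvd m \<Longrightarrow> k * (m div g) = (k div g) * m"
  by auto

lemma ar_c: "(k div g * u) mod l = 1 \<Longrightarrow> (g::nat) dvd k \<Longrightarrow> 0<g \<Longrightarrow> (k * (u * s)) mod (g*l) = (g*s) mod (g*l)"
  by (smt (verit, ccfv_threshold) dvd_div_mult_self mod_mult_left_eq
    mult.commute mult.left_commute mult_1 mult_mod_right)

lemma ar_d: "(g::nat) dvd m \<Longrightarrow> g dvd k \<Longrightarrow> j mod m = (k*a + i) mod m \<Longrightarrow> i < g \<Longrightarrow> j < g \<Longrightarrow> i = j"
  by (metis (lifting) ext add.commute mod_less mod_mod_cancel mod_mult_self1 mult.commute)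

lemma fib_cover:
  assumes t: "\<tau> \<in> rootsb k S \<sigma> b"
  shows "\<exists>g ys. g \<in> Gc \<and> ys \<in> Vset \<sigma> S x (g - 1) \<and> \<tau> \<in> Fib g ys b"
proof -
  have tp: "\<tau> permutes S" and tk: "\<tau> ^^ k = \<sigma>" using t by (auto simp: rootsb_def)
  have ptau: "permutation \<tau>" using tp fin permutation_permutes by blast
  define m where "m = least_power \<tau> x"
  have m0: "0 < m" using least_power_of_permutation(2)[OF ptau] by (simp add: m_def)
  have mdvd: "(\<tau> ^^ j) x = x \<longleftrightarrow> m dvd j" for j using least_power_dvd[OF ptau] by (simp add: m_def)
  have perm_m: "periodic m \<tau> x" unfolding periodic_def using mdvd m0
    by (auto dest: dvd_imp_le)
  have teq: "(\<tau> ^^ a) x = (\<tau> ^^ c) x \<longleftrightarrow> a mod m = c mod m" for a c using per_eq[OF perm_m m0] .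
  have sig_tau: "(\<sigma> ^^ j) z = (\<tau> ^^ (k * j)) z" for j z using tk funpow_mult by metis
  have tS: "(\<tau> ^^ j) z \<in> S" if "z \<in> S" for j z
    using permutes_in_image[OF permutes_funpow[OF tp]] that by blast
  define g where "g = gcd m k"
  have g0: "0 < g" using m0 by (simp add: g_def)
  have gm: "g dvd m" "g dvd k" by (simp_all add: g_def)
  have xper: "(\<sigma> ^^ l) x = x" using perz[OF xS] by (simp add: periodic_def)
  have A: "m dvd k * l" using mdvd[of "k * l"] sig_tau[of l x] xper by simp
  have B: "l dvd m div g"
  proof -
    have "m dvd k * (m div g)" using ar_b[OF gm(2) gm(1)] by simp
    then have "(\<sigma> ^^ (m div g)) x = (\<sigma> ^^ 0) x" using mdvd sig_tau by simp
    then have "(m div g) mod l = 0 mod l" using sig_eq[OF xS, of "m div g" 0] by (simp only:)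
    then have "(m div g) mod l = 0" by simp
    then show ?thesis by (simp add: mod_eq_0_iff_dvd)
  qed
  have C: "m div g dvd l" using ar_a[OF g0 g_def _ A] m0 by simp
  have mg: "m = g * l"
  proof -
    have "m div g = l" using B C by (simp add: dvd_antisym)
    then show ?thesis using gm(1) by (metis dvd_mult_div_cancel)
  qed
  have "gcd (g * l) k = g" using mg g_def by simp
  then have gG: "g \<in> G_set k l" by (simp add: G_set_def)
  have mle: "m \<le> card S"
  proof -
    have "inj_on (\<lambda>j. (\<tau> ^^ j) x) {..<m}" using teq by (intro inj_onI) auto
    then have "card ((\<lambda>j. (\<tau> ^^ j) x) ` {..<m}) = m" by (simp add: card_image)
    moreover have "(\<lambda>j. (\<tau> ^^ j) x) ` {..<m} \<subseteq> S" using tS xS by auto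
    ultimately show ?thesis using card_mono[OF fin] by metis
  qed
  have "l * g \<le> l * Suc n" using mle mg cardS by (simp only: mult.commute)
  then have gle: "g \<le> Suc n" using lpos mult_le_cancel1[of l g "Suc n"] by blast
  have gc: "g \<in> Gc" using gG gle by (simp add: Gc_def)
  define ys where "ys = map (\<lambda>i. (\<tau> ^^ i) x) [1..<g]"
  have zs: "x # ys = map (\<lambda>i. (\<tau> ^^ i) x) [0..<g]" using g0 by (simp add: ys_def upt_conv_Cons)
  have zsn: "(x # ys) ! r = (\<tau> ^^ r) x" if "r < g" for r using zs that by simp
  have yv: "ys \<in> Vset \<sigma> S x (g - 1)"
  proof -
    have "length ys = g - 1" by (simp add: ys_def)
    moreover have "set ys \<subseteq> S" using tS xS by (auto simp: ys_def)
    moreover have "distinct (map (orb \<sigma>) (x # ys))"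
    proof -
      have "inj_on (\<lambda>i. orb \<sigma> ((\<tau> ^^ i) x)) {0..<g}"
      proof (rule inj_onI)
        fix i j assume ij: "i \<in> {0..<g}" "j \<in> {0..<g}" "orb \<sigma> ((\<tau> ^^ i) x) = orb \<sigma> ((\<tau> ^^ j) x)"
        have "(\<tau> ^^ j) x \<in> orb \<sigma> ((\<tau> ^^ i) x)" using ij(3) self_orb by metis
        then obtain a where "(\<tau> ^^ j) x = (\<sigma> ^^ a) ((\<tau> ^^ i) x)" unfolding orb_def by blast
        also have "\<dots> = (\<tau> ^^ (k * a + i)) x" using sig_tau by (simp add: funpow_add)
        finally have jm: "j mod m = (k * a + i) mod m" using teq by blast
        have ig: "i < g" "j < g" using ij(1,2) by auto
        show "i = j" by (rule ar_d[OF gm(1) gm(2) jm ig])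
      qed
      then show ?thesis unfolding zs by (simp add: distinct_map comp_def)
    qed
    ultimately show ?thesis by (simp add: Vset_def)
  qed
  have asp: "aseq g ys ! p = (\<tau> ^^ p) x" if p: "p < g * l" for p
  proof -
    define r s u where "r = p mod g" and "s = p div g" and "u = uu g"
    have rg: "r < g" using g0 by (simp add: r_def)
    have "aseq g ys ! p = (\<sigma> ^^ (u * s)) ((x # ys) ! r)"
      using as_nth[OF gc yv p] by (simp add: r_def s_def u_def)
    also have "\<dots> = (\<tau> ^^ (k * (u * s) + r)) x" using zsn[OF rg] sig_tau by (simp add: funpow_add)
    also have "\<dots> = (\<tau> ^^ p) x"
    proof -
      have "(k * (u * s)) mod (g * l) = (g * s) mod (g * l)"
        using ar_c[OF uu[OF gG] gm(2) g0] by (simp add: u_def)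
      then have "(k * (u * s) + r) mod (g * l) = (g * s + r) mod (g * l)"
        by (metis mod_add_left_eq)
      moreover have "g * s + r = p" by (simp add: r_def s_def)
      ultimately show ?thesis using teq mg by simp
    qed
    finally show ?thesis .
  qed
  have "\<forall>z\<in>Ob g ys. \<tau> z = rho g ys z"
  proof
    fix z assume "z \<in> Ob g ys"
    then obtain p where p: "p < g * l" "z = aseq g ys ! p" using Ob_nth[OF gc yv] by blast
    have sp: "Suc p mod (g * l) < g * l" using g0 lpos by simp
    have "\<tau> z = (\<tau> ^^ Suc p) x" using asp[OF p(1)] p(2) by simp
    also have "\<dots> = (\<tau> ^^ (Suc p mod (g * l))) x"
      using teq[of "Suc p" "Suc p mod (g * l)"] mg by simp
    also have "\<dots> = aseq g ys ! (Suc p mod (g * l))" using asp[OF sp] by simp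
    also have "\<dots> = rho g ys z" using rho_step[OF gc yv p(1)] p(2) by simp
    finally show "\<tau> z = rho g ys z" .
  qed
  then have "\<tau> \<in> Fib g ys b" using t by (simp add: Fib_def)
  then show ?thesis using gc yv by blast
qed

lemma finV: "finite (Vset \<sigma> S x m)"
proof (rule finite_subset)
  show "Vset \<sigma> S x m \<subseteq> {xs. set xs \<subseteq> S \<and> length xs = m}" by (auto simp: Vset_def)
qed (rule finite_lists_length_eq[OF fin])

lemma finGc: "finite Gc"
  by (rule finite_subset[of _ "{..Suc n}"]) (auto simp: Gc_def)

lemma finFib: "finite (Fib g ys b)"
  by (rule finite_subset[OF _ finite_permutations[OF fin]]) (auto simp: Fib_def rootsb_def)

lemma dec_card:
  assumes F: "\<And>(S'::'a set) \<sigma>' j. finite S' \<Longrightarrow> \<sigma>' permutes S' \<Longrightarrow> \<forall>z\<in>S'. periodic l \<sigma>' z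
     \<Longrightarrow> card S' = l * j \<Longrightarrow> j < Suc n \<Longrightarrow> card (rootsb k S' \<sigma>' (\<not> b)) = F j"
  shows "card (rootsb k S \<sigma> b) = (\<Sum>g\<in>Gc. card (Vset \<sigma> S x (g - 1)) * F (Suc n - g))"
proof -
  let ?I = "SIGMA g:Gc. Vset \<sigma> S x (g - 1)"
  let ?A = "\<lambda>i. Fib (fst i) (snd i) b"
  have finI: "finite ?I" using finGc finV by (intro finite_SigmaI) auto
  have U: "rootsb k S \<sigma> b = \<Union> (?A ` ?I)"
  proof
    show "rootsb k S \<sigma> b \<subseteq> \<Union> (?A ` ?I)"
    proof
      fix \<tau> assume "\<tau> \<in> rootsb k S \<sigma> b"
      then obtain g ys where "g \<in> Gc" "ys \<in> Vset \<sigma> S x (g - 1)" "\<tau> \<in> Fib g ys b"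
        using fib_cover by blast
      then show "\<tau> \<in> \<Union> (?A ` ?I)" by force
    qed
    show "\<Union> (?A ` ?I) \<subseteq> rootsb k S \<sigma> b" by (auto simp: Fib_def)
  qed
  have disj: "\<forall>i\<in>?I. \<forall>j\<in>?I. i \<noteq> j \<longrightarrow> ?A i \<inter> ?A j = {}"
  proof (intro ballI impI)
    fix i j assume ij: "i \<in> ?I" "j \<in> ?I" "i \<noteq> j"
    show "?A i \<inter> ?A j = {}"
    proof (rule ccontr)
      assume "?A i \<inter> ?A j \<noteq> {}"
      then obtain \<tau> where "\<tau> \<in> ?A i" "\<tau> \<in> ?A j" by blast
      moreover have "fst i \<in> Gc" "snd i \<in> Vset \<sigma> S x (fst i - 1)"
        "fst j \<in> Gc" "snd j \<in> Vset \<sigma> S x (fst j - 1)" using ij by auto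
      ultimately have "fst i = fst j \<and> snd i = snd j" using fib_disj by blast
      then show False using ij(3) by (simp add: prod_eq_iff)
    qed
  qed
  have "card (rootsb k S \<sigma> b) = (\<Sum>i\<in>?I. card (?A i))"
    unfolding U by (rule card_UN_disjoint[OF finI _ disj]) (simp add: finFib)
  also have "\<dots> = (\<Sum>i\<in>?I. F (Suc n - fst i))"
  proof (rule sum.cong[OF refl])
    fix i assume i: "i \<in> ?I"
    then have gv: "fst i \<in> Gc" "snd i \<in> Vset \<sigma> S x (fst i - 1)" by auto
    have "card (?A i) = card (rootsb k (S - Ob (fst i) (snd i)) (perm_restrict \<sigma> (S - Ob (fst i) (snd i))) (\<not> b))"
      by (rule fib_card[OF gv])
    also have "\<dots> = F (Suc n - fst i)"
      by (rule F[OF finite_Diff[OF fin] sub_perm[OF gv] sub_per[OF gv] sub_card[OF gv]])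
        (use g_pos[OF gv] in simp)
    finally show "card (?A i) = F (Suc n - fst i)" .
  qed
  also have "\<dots> = (\<Sum>g\<in>Gc. \<Sum>ys\<in>Vset \<sigma> S x (g - 1). F (Suc n - g))"
    by (subst sum.Sigma[OF finGc]) (auto simp: finV case_prod_beta)
  also have "\<dots> = (\<Sum>g\<in>Gc. card (Vset \<sigma> S x (g - 1)) * F (Suc n - g))"
    by simp
  finally show ?thesis .
qed

end


lemma orb_closed:
  assumes "\<forall>z\<in>S. f z \<in> S" "y \<in> S"
  shows "orb f y \<subseteq> S"
proof -
  have "(f ^^ j) y \<in> S" for j by (induction j) (use assms in auto)
  then show ?thesis unfolding orb_def by auto
qed

lemma orb_iff:
  assumes "periodic l f y" "periodic l f z" "0 < l"
  shows "z \<in> orb f y \<longleftrightarrow> orb f z = orb f y"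
  using orb_mem_eq[OF _ assms(1,3)] self_orb by metis

lemma Vset_card:
  fixes f :: "'a \<Rightarrow> 'a"
  assumes lpos: "0 < l"
  shows "finite S \<Longrightarrow> \<forall>z\<in>S. f z \<in> S \<Longrightarrow> \<forall>z\<in>S. periodic l f z \<Longrightarrow> card S = l * Suc n \<Longrightarrow> x \<in> S
    \<Longrightarrow> card (Vset f S x m) = (\<Prod>i<m. l * (n - i))"
proof (induction m arbitrary: S n)
  case 0
  have "Vset f S x 0 = {[]}" by (auto simp: Vset_def)
  then show ?case by simp
next
  case (Suc m)
  note fin = Suc.prems(1) and cl = Suc.prems(2) and per = Suc.prems(3) and cS = Suc.prems(4)
    and xS = Suc.prems(5)
  have orbS: "orb f y \<subseteq> S" if "y \<in> S" for y using orb_closed[OF cl that] .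
  have corb: "card (orb f y) = l" if "y \<in> S" for y
  proof -
    have "periodic l f y" using per that by blast
    then show ?thesis by (rule card_orb[OF _ lpos])
  qed
  have eq: "Vset f S x (Suc m) = (\<Union>y\<in>S - orb f x. (Cons y) ` Vset f (S - orb f y) x m)"
  proof
    show "Vset f S x (Suc m) \<subseteq> (\<Union>y\<in>S - orb f x. (Cons y) ` Vset f (S - orb f y) x m)"
    proof
      fix ys assume ys: "ys \<in> Vset f S x (Suc m)"
      then obtain y ys' where yy: "ys = y # ys'" by (cases ys) (auto simp: Vset_def)
      have yS: "y \<in> S" and ys'S: "set ys' \<subseteq> S" and len: "length ys' = m"
        and d: "distinct (orb f x # orb f y # map (orb f) ys')"
        using ys yy by (auto simp: Vset_def)
      have py: "periodic l f y" using per yS by blast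
      have "y \<notin> orb f x" using orb_iff[OF _ py lpos] per xS d by auto
      moreover have "set ys' \<subseteq> S - orb f y"
      proof
        fix z assume z: "z \<in> set ys'"
        then have "orb f z \<noteq> orb f y" using d by auto
        moreover have "z \<in> S" using z ys'S by auto
        ultimately show "z \<in> S - orb f y" using orb_iff[OF py _ lpos] per by auto
      qed
      moreover have "distinct (map (orb f) (x # ys'))" using d by auto
      ultimately show "ys \<in> (\<Union>y\<in>S - orb f x. (Cons y) ` Vset f (S - orb f y) x m)"
        using yy yS len by (auto simp: Vset_def)
    qed
    show "(\<Union>y\<in>S - orb f x. (Cons y) ` Vset f (S - orb f y) x m) \<subseteq> Vset f S x (Suc m)"
    proof
      fix ys assume "ys \<in> (\<Union>y\<in>S - orb f x. (Cons y) ` Vset f (S - orb f y) x m)"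
      then obtain y ys' where yy: "ys = y # ys'" "y \<in> S" "y \<notin> orb f x"
        and v: "ys' \<in> Vset f (S - orb f y) x m" by blast
      have py: "periodic l f y" using per yy(2) by blast
      have len: "length ys' = m" and sub: "set ys' \<subseteq> S - orb f y"
        and d: "distinct (orb f x # map (orb f) ys')" using v by (auto simp: Vset_def)
      have "orb f y \<noteq> orb f x" using orb_iff[OF _ py lpos] per xS yy(3) by auto
      moreover have "orb f y \<notin> orb f ` set ys'"
      proof
        assume "orb f y \<in> orb f ` set ys'"
        then obtain z where "z \<in> set ys'" "orb f z = orb f y" by auto
        moreover then have "z \<in> S" "z \<notin> orb f y" using sub by auto
        ultimately show False using orb_iff[OF py _ lpos] per by auto
      qed
      ultimately have "distinct (map (orb f) (x # ys))" using d yy(1) by auto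
      then show "ys \<in> Vset f S x (Suc m)" using yy sub len by (auto simp: Vset_def)
    qed
  qed
  have card_eq: "card (Vset f S x (Suc m)) = (\<Sum>y\<in>S - orb f x. card (Vset f (S - orb f y) x m))"
  proof -
    have finV: "finite (Vset f T x m)" if "finite T" for T
    proof (rule finite_subset)
      show "Vset f T x m \<subseteq> {xs. set xs \<subseteq> T \<and> length xs = m}" by (auto simp: Vset_def)
    qed (rule finite_lists_length_eq[OF that])
    have "card (\<Union>y\<in>S - orb f x. (Cons y) ` Vset f (S - orb f y) x m)
        = (\<Sum>y\<in>S - orb f x. card ((Cons y) ` Vset f (S - orb f y) x m))"
      by (rule card_UN_disjoint) (use fin finV in auto)
    also have "\<dots> = (\<Sum>y\<in>S - orb f x. card (Vset f (S - orb f y) x m))"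
      by (intro sum.cong refl card_image) (simp add: inj_on_def)
    finally show ?thesis using eq by simp
  qed
  show ?case
  proof (cases n)
    case 0
    have "S - orb f x = {}"
    proof -
      have "card (orb f x) = card S" using corb[OF xS] cS 0 by simp
      then have "orb f x = S" using card_subset_eq[OF fin orbS[OF xS]] by simp
      then show ?thesis by simp
    qed
    then have "card (Vset f S x (Suc m)) = 0" using card_eq by (simp only: sum.empty)
    moreover have "(\<Prod>i<Suc m. l * (n - i)) = 0" using 0 by (intro prod_zero) auto
    ultimately show ?thesis by simp
  next
    case (Suc n')
    have each: "card (Vset f (S - orb f y) x m) = (\<Prod>i<m. l * (n' - i))" if y: "y \<in> S - orb f x" for y
    proof (rule Suc.IH)
      show "finite (S - orb f y)" using fin by simp
      have py: "periodic l f y" using per y by blast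
      show "\<forall>z\<in>S - orb f y. f z \<in> S - orb f y"
      proof
        fix z assume z: "z \<in> S - orb f y"
        have pz: "periodic l f z" "periodic l f (f z)" using per cl z by auto
        have "orb f (f z) = orb f z" using orb_step[OF pz(1) lpos] .
        then have "f z \<notin> orb f y" using orb_iff[OF py pz(2) lpos] orb_iff[OF py pz(1) lpos] z by auto
        then show "f z \<in> S - orb f y" using cl z by auto
      qed
      show "\<forall>z\<in>S - orb f y. periodic l f z" using per by auto
      show "card (S - orb f y) = l * Suc n'"
      proof -
        have "y \<in> S" using y by auto
        then have "card (S - orb f y) = card S - card (orb f y)"
          using card_Diff_subset[OF finite_subset[OF orbS fin] orbS] by blast
        then have "card (S - orb f y) = card S - l" using corb \<open>y \<in> S\<close> by simp
        then show ?thesis using cS Suc by simp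
      qed
      show "x \<in> S - orb f y"
      proof -
        have "y \<notin> orb f x" using y by auto
        then have "orb f y \<noteq> orb f x" using orb_iff[OF _ py lpos] per xS by auto
        then show ?thesis using orb_iff[OF py _ lpos] per xS by auto
      qed
    qed
    have cx: "card (S - orb f x) = l * Suc n'"
    proof -
      have "card (S - orb f x) = card S - card (orb f x)"
        using card_Diff_subset[OF finite_subset[OF orbS fin] orbS] xS by blast
      then have "card (S - orb f x) = card S - l" using corb xS by simp
      then show ?thesis using cS Suc by simp
    qed
    have "card (Vset f S x (Suc m)) = l * Suc n' * (\<Prod>i<m. l * (n' - i))"
      using card_eq each cx by simp
    also have "\<dots> = (\<Prod>i<Suc m. l * (n - i))"
    proof -
      have "(\<Prod>i<Suc m. l * (n - i)) = l * (n - 0) * (\<Prod>i<m. l * (n - Suc i))"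
        by (rule prod.lessThan_Suc_shift)
      then show ?thesis using Suc by simp
    qed
    finally show ?thesis .
  qed
qed


lemma ar_e: "(r::nat) < l \<Longrightarrow> r' < l \<Longrightarrow> Suc r mod l = Suc r' mod l \<Longrightarrow> r = r'"
  by (metis mod_Suc mod_if nat.distinct(1) nat.inject)

lemma ar_f: "0 < (l::nat) \<Longrightarrow> t < l \<Longrightarrow> (l * q + t) div l = q \<and> (l * q + t) mod l = t"
  by auto

lemma ar_g: "(i::nat) < l * c \<Longrightarrow> t < l \<Longrightarrow> l * (i div l) + t < l * c"
  by (metis Euclidean_Rings.div_eq_0_iff bot_nat_0.not_eq_extremum
    div_less_iff_less_mult div_mult_self4 mult.commute nat_arith.rule0 not_less_zero)

definition blk :: "nat \<Rightarrow> nat \<Rightarrow> nat \<Rightarrow> nat" where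
  "blk l c i = (if i < l * c then l * (i div l) + Suc (i mod l) mod l else i)"

lemma blk_pow:
  assumes "0 < l" "i < l * c"
  shows "(blk l c ^^ j) i = l * (i div l) + (i mod l + j) mod l"
proof (induction j)
  case 0 then show ?case by simp
next
  case (Suc j)
  define t where "t = (i mod l + j) mod l"
  have tl: "t < l" using assms(1) by (simp add: t_def)
  have v: "l * (i div l) + t < l * c" using ar_g[OF assms(2) tl] .
  have dm: "(l * (i div l) + t) div l = i div l" "(l * (i div l) + t) mod l = t"
    using ar_f[OF assms(1) tl] by auto
  have "(blk l c ^^ Suc j) i = blk l c (l * (i div l) + t)" using Suc by (simp add: t_def)
  also have "\<dots> = l * (i div l) + Suc t mod l" using v dm by (simp add: blk_def)
  also have "Suc t mod l = (i mod l + Suc j) mod l" by (simp add: t_def mod_Suc_eq)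
  finally show ?case .
qed

lemma blk_perm:
  assumes "0 < l"
  shows "blk l c permutes {..<l * c}"
proof (rule bij_imp_permutes)
  have into: "blk l c ` {..<l * c} \<subseteq> {..<l * c}"
  proof
    fix y assume "y \<in> blk l c ` {..<l * c}"
    then obtain i where i: "i < l * c" "y = blk l c i" by auto
    have "Suc (i mod l) mod l < l" using assms by simp
    then show "y \<in> {..<l * c}" using ar_g[OF i(1)] i by (simp add: blk_def)
  qed
  have inj: "inj_on (blk l c) {..<l * c}"
  proof (rule inj_onI)
    fix i i' assume ii: "i \<in> {..<l * c}" "i' \<in> {..<l * c}" "blk l c i = blk l c i'"
    have t: "Suc (i mod l) mod l < l" "Suc (i' mod l) mod l < l" using assms by auto
    have e: "l * (i div l) + Suc (i mod l) mod l = l * (i' div l) + Suc (i' mod l) mod l"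
      using ii by (simp add: blk_def)
    have "i div l = i' div l" using ar_f[OF assms t(1)] ar_f[OF assms t(2)] e by metis
    moreover have "Suc (i mod l) mod l = Suc (i' mod l) mod l"
      using ar_f[OF assms t(1)] ar_f[OF assms t(2)] e by metis
    then have "i mod l = i' mod l" using ar_e[of "i mod l" l "i' mod l"] assms by simp
    ultimately show "i = i'" by (metis div_mult_mod_eq)
  qed
  show "bij_betw (blk l c) {..<l * c} {..<l * c}"
    using inj endo_inj_surj[OF _ into inj] by (simp add: bij_betw_def)
qed (simp add: blk_def)

lemma blk_orbit:
  assumes "0 < l" "i < l * c"
  shows "orbit (blk l c) i = {l * (i div l) ..< l * (i div l) + l}"
proof -
  have perm: "permutation (blk l c)" using blk_perm[OF assms(1)] permutation_permutes by blast
  have "orbit (blk l c) i = {(blk l c ^^ j) i | j. True}" by (rule orbit_altdef_permutation[OF perm])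
  also have "\<dots> = {l * (i div l) + (i mod l + j) mod l | j. True}" using blk_pow[OF assms] by simp
  also have "\<dots> = {l * (i div l) ..< l * (i div l) + l}"
  proof
    show "{l * (i div l) + (i mod l + j) mod l | j. True} \<subseteq> {l * (i div l) ..< l * (i div l) + l}"
      using assms(1) by auto
    show "{l * (i div l) ..< l * (i div l) + l} \<subseteq> {l * (i div l) + (i mod l + j) mod l | j. True}"
    proof
      fix y assume y: "y \<in> {l * (i div l) ..< l * (i div l) + l}"
      define t where "t = y - l * (i div l)"
      have tl: "t < l" and yt: "y = l * (i div l) + t" using y by (auto simp: t_def)
      have rl: "i mod l < l" using assms(1) by simp
      have "i mod l + (t + l - i mod l) = t + l" using rl by linarith
      then have "(i mod l + (t + l - i mod l)) mod l = t"
        using tl by simp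
      then have "y = l * (i div l) + (i mod l + (t + l - i mod l)) mod l" using yt by simp
      then show "y \<in> {l * (i div l) + (i mod l + j) mod l | j. True}" by blast
    qed
  qed
  finally show ?thesis .
qed

lemma blk_hct:
  assumes "0 < l"
  shows "has_cycle_type (blk l c) {..<l * c} l c"
proof -
  have orbs: "{orbit (blk l c) x | x. x \<in> {..<l * c}} = (\<lambda>q. {l * q ..< l * q + l}) ` {..<c}"
  proof
    show "{orbit (blk l c) x | x. x \<in> {..<l * c}} \<subseteq> (\<lambda>q. {l * q ..< l * q + l}) ` {..<c}"
    proof
      fix Y assume "Y \<in> {orbit (blk l c) x | x. x \<in> {..<l * c}}"
      then obtain x where x: "x < l * c" "Y = orbit (blk l c) x" by auto
      have "x div l < c" using x(1) by (simp add: less_mult_imp_div_less mult.commute)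
      then show "Y \<in> (\<lambda>q. {l * q ..< l * q + l}) ` {..<c}" using blk_orbit[OF assms x(1)] x(2) by auto
    qed
    show "(\<lambda>q. {l * q ..< l * q + l}) ` {..<c} \<subseteq> {orbit (blk l c) x | x. x \<in> {..<l * c}}"
    proof
      fix Y assume "Y \<in> (\<lambda>q. {l * q ..< l * q + l}) ` {..<c}"
      then obtain q where q: "q < c" "Y = {l * q ..< l * q + l}" by auto
      have lq: "l * q < l * c" using q(1) assms by simp
      have "(l * q) div l = q" using assms by simp
      then have "Y = orbit (blk l c) (l * q)" using blk_orbit[OF assms lq] q(2) by simp
      then show "Y \<in> {orbit (blk l c) x | x. x \<in> {..<l * c}}" using lq by auto
    qed
  qed
  have inj: "inj_on (\<lambda>q. {l * q ..< l * q + l}) {..<c}"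
  proof (rule inj_onI)
    fix q q' assume e: "{l * q ..< l * q + l} = {l * q' ..< l * q' + l}"
    have "l * q \<in> {l * q ..< l * q + l}" "l * q' \<in> {l * q' ..< l * q' + l}" using assms by auto
    then have "l * q' \<le> l * q" "l * q \<le> l * q'" using e by auto
    then have "l * q = l * q'" by (rule antisym[rotated])
    then show "q = q'" using assms by simp
  qed
  have "card {orbit (blk l c) x | x. x \<in> {..<l * c}} = c"
    unfolding orbs using card_image[OF inj] by simp
  moreover have "\<forall>x\<in>{..<l * c}. card (orbit (blk l c) x) = l" using blk_orbit[OF assms] by simp
  ultimately show ?thesis using blk_perm[OF assms] by (simp add: has_cycle_type_def)
qed

lemma std_hct: "0 < l \<Longrightarrow> has_cycle_type (std_perm l c) (ground l c) l c"
proof -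
  assume "0 < l"
  then have "has_cycle_type (blk l c) (ground l c) l c" using blk_hct by (simp add: ground_def)
  then show ?thesis unfolding std_perm_def by (rule someI[where P = "\<lambda>\<sigma>. has_cycle_type \<sigma> (ground l c) l c"])
qed

lemma hct_periodic:
  assumes "\<sigma> permutes S" "finite S" "x \<in> S" "card (orbit \<sigma> x) = l"
  shows "periodic l \<sigma> x"
proof -
  have perm: "permutation \<sigma>" using assms(1,2) permutation_permutes by blast
  have xo: "x \<in> orbit \<sigma> x" by (rule permutation_self_in_orbit[OF perm])
  have "card (orbit \<sigma> x) = funpow_dist1 \<sigma> x x"
    using orbit_conv_funpow_dist1[OF xo] inj_on_funpow_dist1[OF xo] by (simp add: card_image)
  then have d: "funpow_dist1 \<sigma> x x = l" using assms(4) by simp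
  show ?thesis unfolding periodic_def
    using funpow_dist1_prop[OF xo] funpow_dist1_least[of _ \<sigma> x x] d by auto
qed

lemma std_good:
  assumes "0 < l"
  shows "finite (ground l c)" "std_perm l c permutes ground l c"
    "\<forall>z\<in>ground l c. periodic l (std_perm l c) z" "card (ground l c) = l * c"
proof -
  have h: "has_cycle_type (std_perm l c) (ground l c) l c" by (rule std_hct[OF assms])
  show f: "finite (ground l c)" by (simp add: ground_def)
  show p: "std_perm l c permutes ground l c" using h by (simp add: has_cycle_type_def)
  show "\<forall>z\<in>ground l c. periodic l (std_perm l c) z"
    using h hct_periodic[OF p f] by (simp add: has_cycle_type_def)
  show "card (ground l c) = l * c" by (simp add: ground_def)
qed


lemma main_eq:
  fixes k l :: nat and S :: "nat set" and \<sigma> :: "nat \<Rightarrow> nat"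
  assumes k: "0 < k" and l: "0 < l" and le: "even l"
  shows "finite S \<Longrightarrow> \<sigma> permutes S \<Longrightarrow> \<forall>z\<in>S. periodic l \<sigma> z \<Longrightarrow> card S = l * c
    \<Longrightarrow> card (rootsb k S \<sigma> b) = card (rootsb k (ground l c) (std_perm l c) b)"
proof (induction c arbitrary: S \<sigma> b rule: less_induct)
  case (less c)
  note fin = less.prems(1) and pm = less.prems(2) and per = less.prems(3) and cS = less.prems(4)
  show ?case
  proof (cases c)
    case 0
    have "S = {}" using fin cS 0 by simp
    then have s1: "\<sigma> = id" using pm by (simp add: permutes_empty)
    have g0: "ground l 0 = {}" by (simp add: ground_def)
    have "std_perm l 0 = id" using std_good(2)[OF l, of 0] g0 by (simp add: permutes_empty)
    then show ?thesis using \<open>S = {}\<close> 0 s1 g0 by simp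
  next
    case (Suc n)
    have "S \<noteq> {}" using cS Suc l by auto
    then obtain x where xS: "x \<in> S" by blast
    have D1: "dec k l S \<sigma> x n" by (unfold_locales) (use k l le fin pm per cS Suc xS in auto)
    have x0: "0 \<in> ground l (Suc n)" using l by (simp add: ground_def)
    have D2: "dec k l (ground l (Suc n)) (std_perm l (Suc n)) 0 n"
      by (unfold_locales) (use k l le std_good[OF l, of "Suc n"] x0 in auto)
    have F: "card (rootsb k S' \<sigma>' (\<not> b)) = card (rootsb k (ground l j) (std_perm l j) (\<not> b))"
      if "finite S'" "\<sigma>' permutes S'" "\<forall>z\<in>S'. periodic l \<sigma>' z" "card S' = l * j" "j < Suc n"
      for S' :: "nat set" and \<sigma>' :: "nat \<Rightarrow> nat" and j
      using less.IH[of j S' \<sigma>' "\<not> b"] that Suc by simp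
    let ?F = "\<lambda>j. card (rootsb k (ground l j) (std_perm l j) (\<not> b))"
    have e1: "card (rootsb k S \<sigma> b) = (\<Sum>g\<in>dec.Gc k l n. card (Vset \<sigma> S x (g - 1)) * ?F (Suc n - g))"
      by (rule dec.dec_card[OF D1]) (rule F; assumption)
    have e2: "card (rootsb k (ground l (Suc n)) (std_perm l (Suc n)) b)
        = (\<Sum>g\<in>dec.Gc k l n. card (Vset (std_perm l (Suc n)) (ground l (Suc n)) 0 (g - 1)) * ?F (Suc n - g))"
      by (rule dec.dec_card[OF D2]) (rule F; assumption)
    have V1: "card (Vset \<sigma> S x m) = (\<Prod>i<m. l * (n - i))" for m
      by (rule Vset_card[OF l fin _ per _ xS]) (use permutes_in_image[OF pm] cS Suc in auto)
    have V2: "card (Vset (std_perm l (Suc n)) (ground l (Suc n)) 0 m) = (\<Prod>i<m. l * (n - i))" for m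
      by (rule Vset_card[OF l std_good(1)[OF l] _ std_good(3)[OF l] _ x0])
        (use permutes_in_image[OF std_good(2)[OF l]] std_good(4)[OF l] in auto)
    show ?thesis unfolding e1 e2 Suc by (intro sum.cong refl) (simp add: V1 V2)
  qed
qed

lemma rec_nat:
  fixes k l n :: nat
  assumes k: "0 < k" and l: "0 < l" and le: "even l"
  shows "card (rootsb k (ground l (Suc n)) (std_perm l (Suc n)) b)
    = (\<Sum>g\<in>{g \<in> G_set k l. g \<le> Suc n}. (\<Prod>i<g - 1. l * (n - i)) *
        card (rootsb k (ground l (Suc n - g)) (std_perm l (Suc n - g)) (\<not> b)))"
proof -
  have x0: "0 \<in> ground l (Suc n)" using l by (simp add: ground_def)
  have D2: "dec k l (ground l (Suc n)) (std_perm l (Suc n)) 0 n"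
    by (unfold_locales) (use k l le std_good[OF l, of "Suc n"] x0 in auto)
  let ?F = "\<lambda>j. card (rootsb k (ground l j) (std_perm l j) (\<not> b))"
  have F: "card (rootsb k S' \<sigma>' (\<not> b)) = ?F j"
    if "finite S'" "\<sigma>' permutes S'" "\<forall>z\<in>S'. periodic l \<sigma>' z" "card S' = l * j" "j < Suc n"
    for S' :: "nat set" and \<sigma>' :: "nat \<Rightarrow> nat" and j
    using main_eq[OF k l le that(1-4)] .
  have e2: "card (rootsb k (ground l (Suc n)) (std_perm l (Suc n)) b)
      = (\<Sum>g\<in>dec.Gc k l n. card (Vset (std_perm l (Suc n)) (ground l (Suc n)) 0 (g - 1)) * ?F (Suc n - g))"
    by (rule dec.dec_card[OF D2]) (rule F; assumption)
  have V2: "card (Vset (std_perm l (Suc n)) (ground l (Suc n)) 0 m) = (\<Prod>i<m. l * (n - i))" for m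
    by (rule Vset_card[OF l std_good(1)[OF l] _ std_good(3)[OF l] _ x0])
      (use permutes_in_image[OF std_good(2)[OF l]] std_good(4)[OF l] in auto)
  show ?thesis unfolding e2 dec.Gc_def[OF D2] by (intro sum.cong refl) (simp add: V2)
qed

lemma re_eq: "re k l c = card (rootsb k (ground l c) (std_perm l c) True)"
  by (simp add: re_def rootsb_def)

lemma ro_eq: "ro k l c = card (rootsb k (ground l c) (std_perm l c) False)"
  by (simp add: ro_def rootsb_def)

lemma base:
  assumes l: "0 < l"
  shows "re k l 0 = 1" "ro k l 0 = 0"
proof -
  have g0: "ground l 0 = {}" by (simp add: ground_def)
  have s0: "std_perm l 0 = id" using std_good(2)[OF l, of 0] g0 by (simp add: permutes_empty)
  have "rootsb k (ground l 0) (std_perm l 0) True = {id}"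
    using g0 s0 by (auto simp: rootsb_def permutes_empty)
  then show "re k l 0 = 1" by (simp add: re_eq)
  have "rootsb k (ground l 0) (std_perm l 0) False = {}"
    using g0 s0 by (auto simp: rootsb_def permutes_empty)
  then show "ro k l 0 = 0" by (simp add: ro_eq)
qed

lemma ff: "m \<le> n \<Longrightarrow> real (\<Prod>i<m. l * (n - i)) * fact (n - m) = real l ^ m * fact n"
proof (induction m)
  case 0 then show ?case by simp
next
  case (Suc m)
  have nm: "n - m = Suc (n - Suc m)" using Suc.prems by simp
  have p: "(\<Prod>i<Suc m. l * (n - i)) = (\<Prod>i<m. l * (n - i)) * (l * (n - m))"
    by (rule prod.lessThan_Suc)
  have "real (\<Prod>i<Suc m. l * (n - i)) * fact (n - Suc m)
      = real (\<Prod>i<m. l * (n - i)) * (real l * (real (n - m) * fact (n - Suc m)))"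
    unfolding p by (simp only: of_nat_mult mult.assoc)
  also have "real (n - m) * fact (n - Suc m) = fact (n - m)"
    by (simp only: nm fact_Suc)
  also have "real (\<Prod>i<m. l * (n - i)) * (real l * fact (n - m)) = real l * (real l ^ m * fact n)"
    using Suc by (simp add: mult.assoc mult.left_commute)
  finally show ?case by simp
qed

lemma rec_real:
  fixes k l n :: nat
  assumes k: "0 < k" and l: "0 < l" and le: "even l"
  shows "real (card (rootsb k (ground l (Suc n)) (std_perm l (Suc n)) b)) / fact n
    = (\<Sum>g\<in>{g \<in> G_set k l. g \<le> Suc n}. real l ^ (g - 1) *
        real (card (rootsb k (ground l (Suc n - g)) (std_perm l (Suc n - g)) (\<not> b))) / fact (Suc n - g))"
proof -
  have G0: "0 \<notin> G_set k l" using k by (simp add: G_set_def)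
  have "real (card (rootsb k (ground l (Suc n)) (std_perm l (Suc n)) b)) / fact n
    = (\<Sum>g\<in>{g \<in> G_set k l. g \<le> Suc n}. real (\<Prod>i<g - 1. l * (n - i)) *
        real (card (rootsb k (ground l (Suc n - g)) (std_perm l (Suc n - g)) (\<not> b))) / fact n)"
    unfolding rec_nat[OF k l le] by (simp add: sum_divide_distrib)
  also have "\<dots> = (\<Sum>g\<in>{g \<in> G_set k l. g \<le> Suc n}. real l ^ (g - 1) *
        real (card (rootsb k (ground l (Suc n - g)) (std_perm l (Suc n - g)) (\<not> b))) / fact (Suc n - g))"
  proof (intro sum.cong refl)
    fix g assume g: "g \<in> {g \<in> G_set k l. g \<le> Suc n}"
    then have g1: "g \<noteq> 0" "g \<le> Suc n" using G0 by (cases g, auto)+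
    then have m: "g - 1 \<le> n" "n - (g - 1) = Suc n - g" by arith+
    have e: "real (\<Prod>i<g - 1. l * (n - i)) * fact (Suc n - g) = real l ^ (g - 1) * fact n"
      using ff[OF m(1), of l] m(2) by simp
    have fn: "(fact n :: real) \<noteq> 0" "(fact (Suc n - g) :: real) \<noteq> 0" by simp_all
    show "real (\<Prod>i<g - 1. l * (n - i)) * real (card (rootsb k (ground l (Suc n - g)) (std_perm l (Suc n - g)) (\<not> b))) / fact n
        = real l ^ (g - 1) * real (card (rootsb k (ground l (Suc n - g)) (std_perm l (Suc n - g)) (\<not> b))) / fact (Suc n - g)"
      using e fn by (simp add: field_simps)
  qed
  finally show ?thesis .
qed

theorem mainTheorem7:
  fixes k l :: nat
  assumes "k > 0" "even k" "l > 0" "even l"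
  shows "Abs_fps (\<lambda>c. real (re k l c) / fact c) = fps_cosh_ser oo inner_ser k l
       \<and> Abs_fps (\<lambda>c. real (ro k l c) / fact c) = fps_sinh_ser oo inner_ser k l"
proof (rule fps_main[OF assms(1)])
  show "re k l 0 = 1" "ro k l 0 = 0" using base[OF assms(3)] by auto
  show "real (re k l (Suc n)) / fact n = (\<Sum>g\<in>{g \<in> G_set k l. g \<le> Suc n}. real l ^ (g - 1) * real (ro k l (Suc n - g)) / fact (Suc n - g))" for n
    unfolding re_eq ro_eq using rec_real[OF assms(1,3,4), of n True] by simp
  show "real (ro k l (Suc n)) / fact n = (\<Sum>g\<in>{g \<in> G_set k l. g \<le> Suc n}. real l ^ (g - 1) * real (re k l (Suc n - g)) / fact (Suc n - g))" for n
    unfolding re_eq ro_eq using rec_real[OF assms(1,3,4), of n False] by simp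
qed


end
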